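(* Let $n\ge 1$, let $C, A_1,\ldots,A_m$ be real symmetric $n\times n$ matrices and $b\in\mathbb{R}^m$, and suppose the semidefinite program $$SOS^*:=\min_{X\in S_n}\ C\cdot X \quad\text{s.t. } A_i\cdot X=b_i\ (i=1,\ldots,m),\ X\succeq 0$$ has an optimal solution. For an $n\times n$ real matrix $U$ let $DD(U):=\{M\in S_n : M=U^TQU \text{ for some diagonally dominant } Q\in S_n\}$, and for a matrix $U$ consider the linear program $$LP(U):\quad \min_{X\in S_n} C\cdot X \quad\text{s.t. } A_i\cdot X=b_i\ (i=1,\ldots,m),\ X\in DD(U).$$ Define the sequence $U_0=I$, and for $k\ge 0$ let $DSOS_k$ be the optimal value of $LP(U_k)$, $X_k$ an optimal solution of $LP(U_k)$, and $U_{k+1}=\mathrm{chol}(X_k)$; assume an optimal solution exists at every iteration. Fix $k$, let $X_k$ and $X_{k+1}$ be optimal solutions of iterations $k$ and $k+1$, and assume that $X_k$ is positive definite and $SOS^*<DSOS_k$. Then $DSOS_{k+1}<DSOS_k$.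
   Context: $S_n$ denotes the real symmetric $n\times n$ matrices and $A\cdot B=\sum_{i,j}A_{ij}B_{ij}=\mathrm{Trace}(AB)$. A symmetric matrix $A$ is diagonally dominant if $a_{ii}\ge\sum_{j\ne i}|a_{ij}|$ for all $i$. For a positive semidefinite matrix $A$, $\mathrm{chol}(A)$ denotes an upper triangular (Cholesky) factor $U$ with $A=U^TU$ (unique with positive diagonal when $A$ is positive definite). *)

theory Defs
  imports "HOL-Analysis.Analysis"
begin

type_synonym 'n sqmat = "real^'n^'n"

definition sym_mat :: "'n::finite sqmat \<Rightarrow> bool" where
  "sym_mat M \<longleftrightarrow> transpose M = M"

definition frob :: "'n::finite sqmat \<Rightarrow> 'n sqmat \<Rightarrow> real" where
  "frob A B = (\<Sum>i\<in>UNIV. \<Sum>j\<in>UNIV. A $ i $ j * B $ i $ j)"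

definition psd :: "'n::finite sqmat \<Rightarrow> bool" where
  "psd X \<longleftrightarrow> sym_mat X \<and> (\<forall>x. 0 \<le> x \<bullet> (X *v x))"

definition pos_def :: "'n::finite sqmat \<Rightarrow> bool" where
  "pos_def X \<longleftrightarrow> sym_mat X \<and> (\<forall>x. x \<noteq> 0 \<longrightarrow> 0 < x \<bullet> (X *v x))"

definition diag_dom :: "'n::finite sqmat \<Rightarrow> bool" where
  "diag_dom Q \<longleftrightarrow> (\<forall>i. (\<Sum>j\<in>UNIV - {i}. \<bar>Q $ i $ j\<bar>) \<le> Q $ i $ i)"

definition DD :: "'n::finite sqmat \<Rightarrow> 'n sqmat set" where
  "DD U = {M. sym_mat M \<and> (\<exists>Q. sym_mat Q \<and> diag_dom Q \<and> M = transpose U ** Q ** U)}"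

text \<open>Cholesky factor: upper triangular U with nonnegative diagonal and X = U^T U
  (for positive definite X this is the unique factor with positive diagonal).\<close>
definition is_chol :: "'n::{finite,linorder} sqmat \<Rightarrow> 'n sqmat \<Rightarrow> bool" where
  "is_chol U X \<longleftrightarrow> (\<forall>i j. j < i \<longrightarrow> U $ i $ j = 0) \<and> (\<forall>i. 0 \<le> U $ i $ i) \<and>
     X = transpose U ** U"

definition affine_feas :: "nat \<Rightarrow> (nat \<Rightarrow> 'n::finite sqmat) \<Rightarrow> (nat \<Rightarrow> real) \<Rightarrow> 'n sqmat \<Rightarrow> bool" where
  "affine_feas m A b X \<longleftrightarrow> sym_mat X \<and> (\<forall>i<m. frob (A i) X = b i)"

definition sdp_feas :: "nat \<Rightarrow> (nat \<Rightarrow> 'n::finite sqmat) \<Rightarrow> (nat \<Rightarrow> real) \<Rightarrow> 'n sqmat set" where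
  "sdp_feas m A b = {X. affine_feas m A b X \<and> psd X}"

definition lp_feas :: "nat \<Rightarrow> (nat \<Rightarrow> 'n::finite sqmat) \<Rightarrow> (nat \<Rightarrow> real) \<Rightarrow> 'n sqmat \<Rightarrow> 'n sqmat set" where
  "lp_feas m A b U = {X. affine_feas m A b X \<and> X \<in> DD U}"

definition is_opt :: "'n::finite sqmat \<Rightarrow> 'n sqmat set \<Rightarrow> 'n sqmat \<Rightarrow> bool" where
  "is_opt C F X \<longleftrightarrow> X \<in> F \<and> (\<forall>Y\<in>F. frob C X \<le> frob C Y)"

definition opt_val :: "'n::finite sqmat \<Rightarrow> 'n sqmat set \<Rightarrow> real" where
  "opt_val C F = Inf ((\<lambda>X. frob C X) ` F)"

end

theory Submission
  imports Defs
begin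

lemma frob_comb: "frob A (a *\<^sub>R X + c *\<^sub>R Y) = a * frob A X + c * frob A Y"
  unfolding frob_def by (simp add: algebra_simps sum.distrib sum_distrib_left)

lemma opt_val_eq: "is_opt C F X \<Longrightarrow> opt_val C F = frob C X"
  unfolding is_opt_def opt_val_def
  by (intro cInf_eq_minimum) auto

lemma transpose_add': "transpose (A + B) = transpose A + transpose (B::real^'n^'m)"
  by (simp add: transpose_def vec_eq_iff)

lemma matrix_add_rdistrib': "((B + C) ** A) = (B ** A) + (C ** (A::real^'a^'b))"
  by (vector matrix_matrix_mult_def sum.distrib[symmetric] field_simps)

lemma pd_inv:
  fixes U :: "real^'n^'n"
  assumes "pos_def (transpose U ** U)"
  shows "\<exists>V. V ** U = mat 1 \<and> U ** V = mat 1"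
proof -
  have "\<forall>x. U *v x = 0 \<longrightarrow> x = 0"
  proof (intro allI impI, rule ccontr)
    fix x assume h: "U *v x = 0" "x \<noteq> 0"
    have "x \<bullet> ((transpose U ** U) *v x) = (U *v x) \<bullet> (U *v x)"
      by (simp add: matrix_vector_mul_assoc[symmetric]) (metis dot_lmul_matrix inner_commute)
    with h assms show False unfolding pos_def_def by auto
  qed
  then obtain V where "V ** U = mat 1" using matrix_left_invertible_ker by blast
  then show ?thesis using matrix_left_right_inverse by blast
qed

theorem theorem3p1:
  fixes C :: "((real, 'n::{finite,linorder}) vec, 'n) vec"
    and A :: "nat \<Rightarrow> ((real, 'n) vec, 'n) vec" and b :: "nat \<Rightarrow> real" and m :: nat
    and U X :: "nat \<Rightarrow> ((real, 'n) vec, 'n) vec" and k :: nat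
  assumes symC: "sym_mat C"
    and symA: "\<forall>i<m. sym_mat (A i)"
    and sdp_solvable: "\<exists>Xs. is_opt C (sdp_feas m A b) Xs"
    and U0: "U 0 = mat 1"
    and Xopt: "\<forall>j. is_opt C (lp_feas m A b (U j)) (X j)"
    and Uchol: "\<forall>j. is_chol (U (Suc j)) (X j)"
    and pd: "pos_def (X k)"
    and gap: "opt_val C (sdp_feas m A b) < opt_val C (lp_feas m A b (U k))"
  shows "opt_val C (lp_feas m A b (U (Suc k))) < opt_val C (lp_feas m A b (U k))"
proof -
  obtain Xs where Xs: "is_opt C (sdp_feas m A b) Xs" using sdp_solvable by blast
  define W where "W = U (Suc k)"
  have XkW: "X k = transpose W ** W" using Uchol unfolding W_def is_chol_def by blast
  obtain V where V: "V ** W = mat 1" "W ** V = mat 1" using pd_inv[of W] pd XkW by auto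
  have lt: "frob C Xs < frob C (X k)"
    using gap opt_val_eq[OF Xs] opt_val_eq[of C _ "X k"] Xopt by metis
  have Xsf: "affine_feas m A b Xs" "sym_mat Xs" using Xs unfolding is_opt_def sdp_feas_def psd_def by auto
  have Xkf: "affine_feas m A b (X k)" using Xopt unfolding is_opt_def lp_feas_def by auto
  define M where "M = transpose V ** Xs ** V"
  define K where "K = 1 + (\<Sum>i\<in>UNIV. \<Sum>j\<in>UNIV. \<bar>M $ i $ j\<bar>)"
  have K1: "K \<ge> 1" unfolding K_def by (simp add: sum_nonneg)
  define l where "l = 1 / K"
  have l0: "0 < l" "l \<le> 1" using K1 unfolding l_def by auto
  define Q where "Q = (1 - l) *\<^sub>R mat 1 + l *\<^sub>R M"
  define Y where "Y = (1 - l) *\<^sub>R X k + l *\<^sub>R Xs"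
  have symM: "sym_mat M" using Xsf unfolding M_def sym_mat_def
    by (simp add: matrix_transpose_mul matrix_mul_assoc)
  have symQ: "sym_mat Q" using symM unfolding Q_def sym_mat_def
    by (simp add: transpose_add' transpose_scalar)
  have symXk: "sym_mat (X k)" using Xkf unfolding affine_feas_def by auto
  have symY: "sym_mat Y" using symXk Xsf unfolding Y_def sym_mat_def
    by (simp add: transpose_add' transpose_scalar)
  have YQ: "Y = transpose W ** Q ** W"
  proof -
    have "transpose W ** M ** W = Xs"
    proof -
      have "transpose W ** M ** W = (transpose (V ** W)) ** Xs ** (V ** W)"
        unfolding M_def by (simp add: matrix_transpose_mul matrix_mul_assoc)
      then show ?thesis using V by simp
    qed
    then show ?thesis unfolding Y_def Q_def XkW
      by (simp add: matrix_add_ldistrib matrix_add_rdistrib' matrix_scalar_ac scalar_matrix_assoc[symmetric])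
  qed
  have ddQ: "diag_dom Q"
    unfolding diag_dom_def
  proof
    fix i
    have off: "(\<Sum>j\<in>UNIV - {i}. \<bar>Q $ i $ j\<bar>) = l * (\<Sum>j\<in>UNIV - {i}. \<bar>M $ i $ j\<bar>)"
      unfolding sum_distrib_left
      by (rule sum.cong) (use l0 in \<open>auto simp: Q_def mat_def abs_mult\<close>)
    have dg: "Q $ i $ i = (1 - l) + l * M $ i $ i" by (simp add: Q_def mat_def)
    have rowsum: "(\<Sum>j\<in>UNIV - {i}. \<bar>M $ i $ j\<bar>) + \<bar>M $ i $ i\<bar> = (\<Sum>j\<in>UNIV. \<bar>M $ i $ j\<bar>)"
      by (metis (no_types, lifting) UNIV_I add.commute finite sum.remove)
    have "(\<Sum>j\<in>UNIV. \<bar>M $ i $ j\<bar>) \<le> (\<Sum>i\<in>UNIV. \<Sum>j\<in>UNIV. \<bar>M $ i $ j\<bar>)"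
      by (rule member_le_sum) (auto simp: sum_nonneg)
    hence "(\<Sum>j\<in>UNIV - {i}. \<bar>M $ i $ j\<bar>) + \<bar>M $ i $ i\<bar> + 1 \<le> K"
      using rowsum unfolding K_def by linarith
    hence "l * ((\<Sum>j\<in>UNIV - {i}. \<bar>M $ i $ j\<bar>) + \<bar>M $ i $ i\<bar> + 1) \<le> l * K"
      using l0 by (intro mult_left_mono) auto
    also have "l * K = 1" using K1 unfolding l_def by auto
    finally have "l * (\<Sum>j\<in>UNIV - {i}. \<bar>M $ i $ j\<bar>) + l * \<bar>M $ i $ i\<bar> + l \<le> 1"
      by (simp add: algebra_simps)
    moreover have "- (l * M $ i $ i) \<le> l * \<bar>M $ i $ i\<bar>"
      using l0 by (metis abs_ge_minus_self abs_mult abs_of_pos minus_mult_right mult_left_mono less_imp_le)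
    ultimately show "(\<Sum>j\<in>UNIV - {i}. \<bar>Q $ i $ j\<bar>) \<le> Q $ i $ i"
      using off dg by linarith
  qed
  have "\<forall>i<m. frob (A i) Y = b i"
    using Xsf Xkf unfolding affine_feas_def Y_def frob_comb by (auto simp: algebra_simps)
  hence Yfeas: "Y \<in> lp_feas m A b W"
    using symY symQ ddQ YQ
    unfolding lp_feas_def affine_feas_def DD_def by auto
  have "opt_val C (lp_feas m A b W) = frob C (X (Suc k))"
    using opt_val_eq Xopt W_def by metis
  also have "\<dots> \<le> frob C Y" using Xopt Yfeas unfolding is_opt_def W_def by auto
  also have "frob C Y = (1 - l) * frob C (X k) + l * frob C Xs" unfolding Y_def by (rule frob_comb)
  also have "\<dots> < frob C (X k)" proof -
    have "l * frob C Xs < l * frob C (X k)" using lt l0 by simp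
    thus ?thesis by (simp add: algebra_simps)
  qed
  also have "frob C (X k) = opt_val C (lp_feas m A b (U k))" using opt_val_eq Xopt by metis
  finally show ?thesis unfolding W_def .
qed

end
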